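(* Let $(\mathcal{M},d)$ be an NPC space, $\alpha\in[1,2]$, $P\in\mathcal{P}_\alpha(\mathcal{M})$, and let $x^*$ be a minimizer of $F_\alpha$ (assumed to exist). For $x\in\mathcal{M}\setminus\{x^*\}$, if $b_\alpha(x)>0$ then $$ d(x,x^* )^\alpha\le\frac1{b_\alpha(x)}\int_{\mathcal{M}}\left(d(x,y)^\alpha-d(x^*,y)^\alpha\right)dP(y). $$ Consequently, if $B_\alpha:=\inf_{x\in\mathcal{M}\setminus\{x^*\}}b_\alpha(x)>0$, then for all $x\in\mathcal{M}$, $d(x,x^* )^\alpha\le B_\alpha^{-1}\int(d(x,y)^\alpha-d(x^*,y)^\alpha)\,dP(y)$.
   Context: NPC space: a Polish space $(\mathcal{M},d)$ such that for any $x_0,x_1$ there is $y$ with $d(z,y)^2\le\frac12d(z,x_0)^2+\frac12d(z,x_1)^2-\frac14d(x_0,x_1)^2$ for all $z$; such spaces are uniquely geodesic (geodesic: $\gamma:[0,1]\to\mathcal{M}$ with $d(\gamma_s,\gamma_t)=|s-t|d(\gamma_0,\gamma_1)$). $\mathcal{P}_\alpha(\mathcal{M})$ is the set of Borel probability measures $P$ with $\int d(x,y)^\alpha dP(y)<\infty$ for some $x$. $F_\alpha(x)=\int d(x,y)^\alpha dP(y)$. For $x\ne x^*$, $\gamma^x$ is the geodesic with $\gamma^x_0=x^*$, $\gamma^x_1=x$, and $$ b_\alpha(x)=\sup_{t\in(0,1]}\frac{F_\alpha(\gamma^x_t)-\{t^{\alpha/2}+(1-t)^{\alpha/2}\}F_\alpha(x^*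 )}{t^{\alpha/2}d(x,x^* )^\alpha}. $$ *)

theory Defs
  imports "HOL-Probability.Probability"
begin

text \<open>NPC space condition (the ambient Polish space is a type of class polish_space).\<close>
definition NPC :: "('a::metric_space) itself \<Rightarrow> bool" where
  "NPC _ \<longleftrightarrow> (\<forall>x0 x1::'a. \<exists>y. \<forall>z.
      (dist z y)^2 \<le> (1/2) * (dist z x0)^2 + (1/2) * (dist z x1)^2 - (1/4) * (dist x0 x1)^2)"

definition geodesic :: "(real \<Rightarrow> 'a::metric_space) \<Rightarrow> bool" where
  "geodesic \<gamma> \<longleftrightarrow> (\<forall>s\<in>{0..1}. \<forall>t\<in>{0..1}.
      dist (\<gamma> s) (\<gamma> t) = \<bar>s - t\<bar> * dist (\<gamma> 0) (\<gamma> 1))"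

definition geod_from :: "'a::metric_space \<Rightarrow> 'a \<Rightarrow> real \<Rightarrow> 'a" where
  "geod_from xs x = (THE \<gamma>. geodesic \<gamma> \<and> \<gamma> 0 = xs \<and> \<gamma> 1 = x \<and>
                         (\<forall>t. t \<notin> {0..1} \<longrightarrow> \<gamma> t = undefined))"

definition P_alpha :: "real \<Rightarrow> ('a::metric_space) measure \<Rightarrow> bool" where
  "P_alpha \<alpha> P \<longleftrightarrow> (\<exists>x. integrable P (\<lambda>y. dist x y powr \<alpha>))"

definition F_alpha :: "real \<Rightarrow> ('a::metric_space) measure \<Rightarrow> 'a \<Rightarrow> real" where
  "F_alpha \<alpha> P x = (\<integral>y. dist x y powr \<alpha> \<partial>P)"

definition b_alpha :: "real \<Rightarrow> ('a::metric_space) measure \<Rightarrow> 'a \<Rightarrow> 'a \<Rightarrow> real" where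
  "b_alpha \<alpha> P xs x = (SUP t\<in>{0<..1}.
     (F_alpha \<alpha> P (geod_from xs x t) - (t powr (\<alpha>/2) + (1 - t) powr (\<alpha>/2)) * F_alpha \<alpha> P xs)
     / (t powr (\<alpha>/2) * dist x xs powr \<alpha>))"

end

theory Submission
  imports Defs
begin

definition Cpt :: "'a::metric_space \<Rightarrow> 'a \<Rightarrow> real \<Rightarrow> 'a \<Rightarrow> bool" where
  "Cpt x0 x1 t p \<longleftrightarrow> (\<forall>z. (dist z p)^2 \<le> (1-t)*(dist z x0)^2 + t*(dist z x1)^2 - t*(1-t)*(dist x0 x1)^2)"

lemma Cpt_tpoint:
  assumes "Cpt x0 x1 t p" "0 \<le> t" "t \<le> 1"
  shows "dist x0 p = t * dist x0 x1 \<and> dist p x1 = (1-t) * dist x0 x1"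
proof -
  let ?D = "dist x0 x1"
  have h0: "(dist x0 p)^2 \<le> (1-t)*(dist x0 x0)^2 + t*(dist x0 x1)^2 - t*(1-t)*?D^2"
    using assms(1) unfolding Cpt_def by blast
  have "(1-t)*(dist x0 x0)^2 + t*(dist x0 x1)^2 - t*(1-t)*?D^2 = (t*?D)^2"
    by (simp add: power2_eq_square algebra_simps)
  hence "(dist x0 p)^2 \<le> (t*?D)^2" using h0 by linarith
  hence a: "dist x0 p \<le> t*?D" by (rule power2_le_imp_le) (use assms in auto)
  have h1: "(dist x1 p)^2 \<le> (1-t)*(dist x1 x0)^2 + t*(dist x1 x1)^2 - t*(1-t)*?D^2"
    using assms(1) unfolding Cpt_def by blast
  have "(1-t)*(dist x1 x0)^2 + t*(dist x1 x1)^2 - t*(1-t)*?D^2 = ((1-t)*?D)^2"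
    by (simp add: power2_eq_square algebra_simps dist_commute)
  hence "(dist x1 p)^2 \<le> ((1-t)*?D)^2" using h1 by linarith
  hence b: "dist x1 p \<le> (1-t)*?D" by (rule power2_le_imp_le) (use assms in auto)
  have "?D \<le> dist x0 p + dist p x1" by (rule dist_triangle)
  thus ?thesis using a b by (simp add: dist_commute algebra_simps)
qed


lemma Cpt_dist:
  assumes "Cpt x0 x1 s p" "Cpt x0 x1 u q" "0 \<le> s" "s \<le> 1" "0 \<le> u" "u \<le> 1"
  shows "dist p q \<le> \<bar>s - u\<bar> * dist x0 x1"
proof -
  let ?D = "dist x0 x1"
  have h: "dist q x0 = u * ?D" "dist q x1 = (1-u)*?D"
    using Cpt_tpoint[OF assms(2,5,6)] by (auto simp: dist_commute)
  have "(dist q p)^2 \<le> (1-s)*(dist q x0)^2 + s*(dist q x1)^2 - s*(1-s)*?D^2"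
    using assms(1) unfolding Cpt_def by blast
  also have "\<dots> = (1-s)*(u*?D)^2 + s*((1-u)*?D)^2 - s*(1-s)*?D^2" using h by simp
  also have "\<dots> = (\<bar>s-u\<bar>*?D)^2" by (simp add: power2_eq_square algebra_simps)
  finally have "(dist q p)^2 \<le> (\<bar>s-u\<bar>*?D)^2" .
  hence "dist q p \<le> \<bar>s-u\<bar>*?D" by (rule power2_le_imp_le) simp
  thus ?thesis by (simp add: dist_commute)
qed

lemma lin_aux: "(u::real) \<le> 1/2*x + 1/2*y - 1/4*e \<Longrightarrow> x \<le> x' \<Longrightarrow> y \<le> y' \<Longrightarrow> e' \<le> e \<Longrightarrow> u \<le> 1/2*x' + 1/2*y' - 1/4*e'"
  by linarith

lemma Cpt_mid:
  assumes npc: "NPC TYPE('a::metric_space)"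
    and "Cpt x0 x1 a pa" "Cpt x0 x1 b (pb::'a)" "0 \<le> a" "a \<le> b" "b \<le> 1"
  shows "\<exists>m. Cpt x0 x1 ((a+b)/2) m"
proof -
  let ?D = "dist x0 x1"
  obtain y where y: "\<And>z. (dist z y)^2 \<le> (1/2) * (dist z pa)^2 + (1/2) * (dist z pb)^2 - (1/4) * (dist pa pb)^2"
    using npc unfolding NPC_def by blast
  have "dist x0 pb \<le> dist x0 pa + dist pa pb" by (rule dist_triangle)
  moreover have "dist x0 pa = a * ?D" using Cpt_tpoint[OF assms(2) assms(4)] assms by simp
  moreover have "dist x0 pb = b * ?D" using Cpt_tpoint[OF assms(3)] assms by simp
  ultimately have e: "(b-a)*?D \<le> dist pa pb" by (simp add: algebra_simps)
  have e2: "((b-a)*?D)^2 \<le> (dist pa pb)^2"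
    using e assms by (intro power_mono) auto
  show ?thesis
  proof (intro exI, unfold Cpt_def, intro allI)
    fix z
    have ya: "(dist z pa)^2 \<le> (1-a)*(dist z x0)^2 + a*(dist z x1)^2 - a*(1-a)*?D^2"
      using assms(2) unfolding Cpt_def by blast
    have yb: "(dist z pb)^2 \<le> (1-b)*(dist z x0)^2 + b*(dist z x1)^2 - b*(1-b)*?D^2"
      using assms(3) unfolding Cpt_def by blast
    have eq: "((b-a)*?D)^2 = b^2*?D^2 - 2*a*b*?D^2 + a^2*?D^2" by (simp add: power2_eq_square algebra_simps)
    have eq2: "(1-(a+b)/2)*(dist z x0)^2 + (a+b)/2*(dist z x1)^2 - (a+b)/2*(1-(a+b)/2)*?D^2
       = (1/2)*((1-a)*(dist z x0)^2 + a*(dist z x1)^2 - a*(1-a)*?D^2)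
       + (1/2)*((1-b)*(dist z x0)^2 + b*(dist z x1)^2 - b*(1-b)*?D^2)
       - (1/4)*(b^2*?D^2 - 2*a*b*?D^2 + a^2*?D^2)"
      by (simp add: power2_eq_square field_simps)
    show "(dist z y)^2 \<le> (1-(a+b)/2)*(dist z x0)^2 + (a+b)/2*(dist z x1)^2 - (a+b)/2*(1-(a+b)/2)*?D^2"
      unfolding eq2 eq[symmetric] by (rule lin_aux[OF y[of z] ya yb e2])
  qed
qed

lemma Cpt_dyadic:
  assumes npc: "NPC TYPE('a::metric_space)"
  shows "\<forall>k \<le> (2::nat)^n. \<exists>p::'a. Cpt x0 x1 (real k / 2^n) p"
proof (induction n)
  case 0
  show ?case
  proof (intro allI impI)
    fix k :: nat assume "k \<le> 2^0"
    hence "k = 0 \<or> k = 1" by auto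
    thus "\<exists>p::'a. Cpt x0 x1 (real k / 2^0) p"
    proof
      assume "k = 0" thus ?thesis by (intro exI[of _ x0]) (simp add: Cpt_def)
    next
      assume "k = 1" thus ?thesis by (intro exI[of _ x1]) (simp add: Cpt_def dist_commute)
    qed
  qed
next
  case (Suc n)
  show ?case
  proof (intro allI impI)
    fix k :: nat assume k: "k \<le> 2^Suc n"
    obtain j where "k = 2*j \<or> k = 2*j+1" by (metis oddE evenE)
    thus "\<exists>p::'a. Cpt x0 x1 (real k / 2^Suc n) p"
    proof
      assume kj: "k = 2*j"
      hence "j \<le> 2^n" using k by simp
      then obtain p where "Cpt x0 x1 (real j / 2^n) p" using Suc by blast
      moreover have "real k / 2^Suc n = real j / 2^n" using kj by simp
      ultimately show ?thesis by metis
    next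
      assume kj: "k = 2*j+1"
      hence j1: "j+1 \<le> 2^n" using k by simp
      hence j0: "j \<le> 2^n" by simp
      obtain p where p: "Cpt x0 x1 (real j / 2^n) p" using Suc j0 by blast
      obtain q where q: "Cpt x0 x1 (real (j+1) / 2^n) q" using Suc j1 by blast
      have "real (j+1) \<le> 2^n" using j1
        by (metis of_nat_le_iff of_nat_numeral of_nat_power)
      hence r: "real (j+1) / 2^n \<le> 1" by simp
      have r2: "real j / 2^n \<le> real (j+1) / 2^n" by (simp add: divide_right_mono)
      obtain m where "Cpt x0 x1 ((real j / 2^n + real (j+1) / 2^n)/2) m"
        using Cpt_mid[OF npc p q _ r2 r] by auto
      moreover have "(real j / 2^n + real (j+1) / 2^n)/2 = real k / 2^Suc n" using kj
        by (simp add: field_simps)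
      ultimately show ?thesis by metis
    qed
  qed
qed

lemma Cpt_exists:
  assumes npc: "NPC TYPE('a::complete_space)" and t: "0 \<le> t" "t \<le> 1"
  shows "\<exists>p::'a. Cpt x0 x1 t p"
proof -
  define k where "k n = nat \<lfloor>2^n * t\<rfloor>" for n :: nat
  define a where "a n = real (k n) / 2^n" for n :: nat
  have kle: "k n \<le> 2^n" for n
  proof -
    have "2^n * t \<le> 2^n" using t by simp
    hence "\<lfloor>2^n * t\<rfloor> \<le> 2^n" by (metis floor_le_numeral floor_mono floor_of_nat of_nat_numeral of_nat_power floor_power floor_numeral)
    thus ?thesis unfolding k_def by (simp add: nat_le_iff)
  qed
  have "\<forall>n. \<exists>p::'a. Cpt x0 x1 (a n) p" using Cpt_dyadic[OF npc] kle unfolding a_def by blast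
  then obtain p :: "nat \<Rightarrow> 'a" where p: "\<And>n. Cpt x0 x1 (a n) (p n)" by metis
  have abnd: "t - 1/2^n \<le> a n \<and> a n \<le> t" for n
  proof -
    have f: "real (k n) = of_int \<lfloor>2^n * t\<rfloor>" unfolding k_def using t by simp
    have "of_int \<lfloor>2^n * t\<rfloor> \<le> 2^n * t" "2^n * t < of_int \<lfloor>2^n * t\<rfloor> + 1" by linarith+
    note h = this
    have "t - 1/2^n = (2^n*t - 1)/2^n" by (simp add: field_simps)
    also have "\<dots> \<le> of_int \<lfloor>2^n * t\<rfloor> / 2^n" by (rule divide_right_mono) (use h in linarith, simp)
    finally have 1: "t - 1/2^n \<le> a n" unfolding a_def f .
    have "a n \<le> (2^n * t) / 2^n" unfolding a_def f by (rule divide_right_mono) (use h in linarith, simp)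
    thus ?thesis using 1 by simp
  qed
  have a0: "0 \<le> a n" "a n \<le> 1" for n unfolding a_def using kle[of n]
    by (auto simp: divide_le_eq_1)
  have alim: "a \<longlonglongrightarrow> t"
  proof (rule tendsto_sandwich[of "\<lambda>n. t - 1/2^n" _ _ "\<lambda>n. t"])
    show "\<forall>\<^sub>F n in sequentially. t - 1/2^n \<le> a n" using abnd by simp
    show "\<forall>\<^sub>F n in sequentially. a n \<le> t" using abnd by simp
    have "(\<lambda>n. 1/2^n :: real) \<longlonglongrightarrow> 0" by (intro LIMSEQ_divide_realpow_zero) auto
    thus "(\<lambda>n. t - 1/2^n) \<longlonglongrightarrow> t" using tendsto_diff[of "\<lambda>_. t" t sequentially] by fastforce
  qed simp
  have "Cauchy a" using alim by (rule LIMSEQ_imp_Cauchy)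
  have "Cauchy p"
  proof (rule metric_CauchyI)
    fix e :: real assume e: "e > 0"
    let ?D = "dist x0 x1"
    have "e / (?D+1) > 0" using e by (simp add: add_nonneg_pos)
    then obtain M where M: "\<forall>m\<ge>M. \<forall>n\<ge>M. dist (a m) (a n) < e / (?D+1)"
      using \<open>Cauchy a\<close> unfolding Cauchy_def by blast
    show "\<exists>M. \<forall>m\<ge>M. \<forall>n\<ge>M. dist (p m) (p n) < e"
    proof (intro exI allI impI)
      fix m n assume "m \<ge> M" "n \<ge> M"
      hence "\<bar>a m - a n\<bar> < e / (?D+1)" using M by (simp add: dist_real_def)
      have "dist (p m) (p n) \<le> \<bar>a m - a n\<bar> * ?D" using Cpt_dist[OF p p a0 a0] .
      also have "\<dots> \<le> e / (?D+1) * ?D"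
        using \<open>\<bar>a m - a n\<bar> < e / (?D+1)\<close> by (intro mult_right_mono) auto
      also have "\<dots> < e" using e add_pos_nonneg[OF zero_less_one zero_le_dist[of x0 x1]] by (simp add: field_simps)
      finally show "dist (p m) (p n) < e" .
    qed
  qed
  then obtain L where L: "p \<longlonglongrightarrow> L" using Cauchy_convergent_iff convergent_def by blast
  have "Cpt x0 x1 t L" unfolding Cpt_def
  proof
    fix z
    show "(dist z L)^2 \<le> (1-t)*(dist z x0)^2 + t*(dist z x1)^2 - t*(1-t)*(dist x0 x1)^2"
    proof (rule LIMSEQ_le)
      show "(\<lambda>n. (dist z (p n))^2) \<longlonglongrightarrow> (dist z L)^2"
        by (intro tendsto_intros L)
      show "(\<lambda>n. (1-a n)*(dist z x0)^2 + a n*(dist z x1)^2 - a n*(1-a n)*(dist x0 x1)^2)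
             \<longlonglongrightarrow> (1-t)*(dist z x0)^2 + t*(dist z x1)^2 - t*(1-t)*(dist x0 x1)^2"
        by (intro tendsto_intros alim)
      show "\<exists>N. \<forall>n\<ge>N. (dist z (p n))^2 \<le> (1-a n)*(dist z x0)^2 + a n*(dist z x1)^2 - a n*(1-a n)*(dist x0 x1)^2"
        using p unfolding Cpt_def by blast
    qed
  qed
  thus ?thesis by blast
qed

lemma tpoint_unique:
  assumes npc: "NPC TYPE('a::metric_space)" and t: "0 \<le> t" "t \<le> 1"
    and p: "dist x0 p = t * dist x0 x1" "dist p x1 = (1-t) * dist x0 (x1::'a)"
    and q: "dist x0 q = t * dist x0 x1" "dist q x1 = (1-t) * dist x0 x1"
  shows "p = q"
proof (rule ccontr)
  assume "p \<noteq> q"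
  hence dpos: "dist p q > 0" by simp
  let ?D = "dist x0 x1" and ?d = "dist p q"
  obtain m where m: "\<And>z. (dist z m)^2 \<le> (1/2) * (dist z p)^2 + (1/2) * (dist z q)^2 - (1/4) * (dist p q)^2"
    using npc unfolding NPC_def by blast
  have "?d^2 > 0" using dpos by simp
  have "(dist x0 m)^2 \<le> (1/2) * (t*?D)^2 + (1/2) * (t*?D)^2 - (1/4) * ?d^2"
    using m[of x0] p q by simp
  hence "(dist x0 m)^2 < (t*?D)^2" using \<open>?d^2 > 0\<close> by linarith
  hence a: "dist x0 m < t*?D" by (rule power_less_imp_less_base) (use t in simp)
  have "(dist x1 m)^2 \<le> (1/2) * ((1-t)*?D)^2 + (1/2) * ((1-t)*?D)^2 - (1/4) * ?d^2"
    using m[of x1] p q by (simp add: dist_commute)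
  hence "(dist x1 m)^2 < ((1-t)*?D)^2" using \<open>?d^2 > 0\<close> by linarith
  hence b: "dist x1 m < (1-t)*?D" by (rule power_less_imp_less_base) (use t in simp)
  have "?D \<le> dist x0 m + dist m x1" by (rule dist_triangle)
  thus False using a b by (simp add: dist_commute algebra_simps)
qed

lemma geod_from_eq:
  assumes npc: "NPC TYPE('a::complete_space)"
  shows "geod_from x0 (x1::'a) = (\<lambda>t. if t \<in> {0..1} then (SOME p. Cpt x0 x1 t p) else undefined)"
    (is "_ = ?G")
proof -
  let ?D = "dist x0 x1"
  have GC: "Cpt x0 x1 t (?G t)" if "t \<in> {0..1}" for t
    using that someI_ex[OF Cpt_exists[OF npc, of t x0 x1]] by auto
  have Gt: "dist x0 (?G t) = t * ?D \<and> dist (?G t) x1 = (1-t) * ?D" if "t \<in> {0..1}" for t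
    using Cpt_tpoint[OF GC[OF that]] that by auto
  have G0: "?G 0 = x0" using Gt[of 0] by simp
  have G1: "?G 1 = x1" using Gt[of 1] by simp
  have geo: "geodesic ?G" unfolding geodesic_def G0 G1
  proof (intro ballI)
    fix s t :: real assume s: "s \<in> {0..1}" and t: "t \<in> {0..1}"
    have le: "dist (?G s) (?G t) \<le> \<bar>s - t\<bar> * ?D"
      using Cpt_dist[OF GC[OF s] GC[OF t]] s t by auto
    have "dist x0 (?G t) \<le> dist x0 (?G s) + dist (?G s) (?G t)" by (rule dist_triangle)
    moreover have "dist x0 (?G s) \<le> dist x0 (?G t) + dist (?G s) (?G t)"
      by (metis dist_commute dist_triangle)
    ultimately have "\<bar>s - t\<bar> * ?D \<le> dist (?G s) (?G t)"
      using Gt[OF s] Gt[OF t] by (auto simp: abs_if algebra_simps)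
    thus "dist (?G s) (?G t) = \<bar>s - t\<bar> * ?D" using le by linarith
  qed
  show ?thesis unfolding geod_from_def
  proof (rule the_equality)
    show "geodesic ?G \<and> ?G 0 = x0 \<and> ?G 1 = x1 \<and> (\<forall>t. t \<notin> {0..1} \<longrightarrow> ?G t = undefined)"
      by (intro conjI) (fact geo, fact G0, fact G1, simp)
  next
    fix \<gamma> assume h: "geodesic \<gamma> \<and> \<gamma> 0 = x0 \<and> \<gamma> 1 = x1 \<and> (\<forall>t. t \<notin> {0..1} \<longrightarrow> \<gamma> t = undefined)"
    have g: "\<And>s t. s \<in> {0..1} \<Longrightarrow> t \<in> {0..1} \<Longrightarrow> dist (\<gamma> s) (\<gamma> t) = \<bar>s - t\<bar> * ?D"
      using h unfolding geodesic_def by simp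
    have h0: "\<gamma> 0 = x0" and h1: "\<gamma> 1 = x1" using h by simp_all
    have hu: "\<And>t. t \<notin> {0..1} \<Longrightarrow> \<gamma> t = undefined" using h by simp
    show "\<gamma> = ?G"
    proof
      fix t
      show "\<gamma> t = ?G t"
      proof (cases "t \<in> {0..1}")
        case True
        have "dist (\<gamma> 0) (\<gamma> t) = \<bar>0 - t\<bar> * ?D" using g[of 0 t] True by simp
        hence 1: "dist x0 (\<gamma> t) = t * ?D" using h0 True by simp
        have "dist (\<gamma> t) (\<gamma> 1) = \<bar>t - 1\<bar> * ?D" using g[of t 1] True by simp
        hence 2: "dist (\<gamma> t) x1 = (1-t) * ?D" using h1 True by simp
        have 3: "dist x0 (?G t) = t * ?D" "dist (?G t) x1 = (1-t) * ?D" using Gt[OF True] by simp_all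
        have "\<gamma> t = ?G t" by (rule tpoint_unique[OF npc _ _ 1 2 3]) (use True in simp_all)
        thus ?thesis .
      next
        case False thus ?thesis using hu[OF False] by (simp only: if_False)
      qed
    qed
  qed
qed

lemma geod_Cpt:
  assumes npc: "NPC TYPE('a::complete_space)" and t: "0 \<le> t" "t \<le> 1"
  shows "Cpt x0 (x1::'a) t (geod_from x0 x1 t)"
  using geod_from_eq[OF npc, of x0 x1] someI_ex[OF Cpt_exists[OF npc t, of x0 x1]] t by simp

lemma geod_one:
  assumes npc: "NPC TYPE('a::complete_space)"
  shows "geod_from x0 (x1::'a) 1 = x1"
  using Cpt_tpoint[OF geod_Cpt[OF npc, of 1 x0 x1]] by simp

lemma powr_subadd:
  fixes a b p :: real
  assumes "0 \<le> a" "0 \<le> b" "0 < p" "p \<le> 1"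
  shows "(a+b) powr p \<le> a powr p + b powr p"
proof (cases "a + b = 0")
  case True thus ?thesis using assms by simp
next
  case False
  let ?s = "a+b"
  have s: "?s > 0" using False assms by simp
  have "a/?s \<le> (a/?s) powr p"
    using powr_mono'[of p 1 "a/?s"] assms s by simp
  moreover have "b/?s \<le> (b/?s) powr p"
    using powr_mono'[of p 1 "b/?s"] assms s by simp
  moreover have "a/?s + b/?s = 1" using s by (simp add: add_divide_distrib[symmetric])
  ultimately have "1 \<le> (a/?s) powr p + (b/?s) powr p" by linarith
  hence "?s powr p * 1 \<le> ?s powr p * ((a/?s) powr p + (b/?s) powr p)"
    by (intro mult_left_mono) auto
  also have "\<dots> = a powr p + b powr p"
    using s by (simp add: powr_divide distrib_left)
  finally show ?thesis by simp
qed

lemma sq_powr: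
  fixes d \<alpha> :: real assumes "0 \<le> d" "0 < \<alpha>"
  shows "(d^2) powr (\<alpha>/2) = d powr \<alpha>"
proof (cases "d = 0")
  case True thus ?thesis using assms by simp
next
  case False
  have "d^2 = d powr 2" using assms(1) by (rule powr_numeral[symmetric])
  hence "(d^2) powr (\<alpha>/2) = (d powr 2) powr (\<alpha>/2)" by (rule arg_cong)
  also have "\<dots> = d powr \<alpha>" by (simp only: powr_powr) simp
  finally show ?thesis .
qed

lemma pointwise_bound:
  fixes A B G t \<alpha> :: real
  assumes "0 \<le> A" "0 \<le> B" "0 \<le> G" "0 \<le> t" "t \<le> 1" "0 < \<alpha>" "\<alpha> \<le> 2"
    and h: "G^2 \<le> (1-t)*A^2 + t*B^2"
  shows "G powr \<alpha> \<le> (1-t) powr (\<alpha>/2) * A powr \<alpha> + t powr (\<alpha>/2) * B powr \<alpha>"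
proof -
  have "G powr \<alpha> = (G^2) powr (\<alpha>/2)" using assms by (intro sq_powr[symmetric]) auto
  also have "\<dots> \<le> ((1-t)*A^2 + t*B^2) powr (\<alpha>/2)"
    using h assms by (intro powr_mono2) auto
  also have "\<dots> \<le> ((1-t)*A^2) powr (\<alpha>/2) + (t*B^2) powr (\<alpha>/2)"
    using assms by (intro powr_subadd) auto
  also have "\<dots> = (1-t) powr (\<alpha>/2) * A powr \<alpha> + t powr (\<alpha>/2) * B powr \<alpha>"
    using assms by (simp only: powr_mult sq_powr)
  finally show ?thesis .
qed

lemma powr_tri:
  fixes a b \<alpha> :: real assumes "0 \<le> a" "0 \<le> b" "0 \<le> \<alpha>"
  shows "(a+b) powr \<alpha> \<le> 2 powr \<alpha> * (a powr \<alpha> + b powr \<alpha>)"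
proof -
  have "(a+b) powr \<alpha> \<le> (2 * max a b) powr \<alpha>" using assms by (intro powr_mono2) auto
  also have "\<dots> = 2 powr \<alpha> * max a b powr \<alpha>" using assms by (simp add: powr_mult)
  also have "\<dots> \<le> 2 powr \<alpha> * (a powr \<alpha> + b powr \<alpha>)"
    by (intro mult_left_mono) (auto simp: max_def)
  finally show ?thesis .
qed

lemma integrable_dist_powr:
  fixes P :: "('a::polish_space) measure"
  assumes prob: "prob_space P" and borel: "sets P = sets borel"
    and Pa: "P_alpha \<alpha> P" and al: "0 \<le> \<alpha>"
  shows "integrable P (\<lambda>y. dist z y powr \<alpha>)"
proof -
  obtain x0 where x0: "integrable P (\<lambda>y. dist x0 y powr \<alpha>)" using Pa unfolding P_alpha_def by blast
  interpret prob_space P by (rule prob)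
  have meas: "(\<lambda>y. dist z y powr \<alpha>) \<in> borel_measurable P"
    unfolding measurable_cong_sets[OF borel refl] by measurable
  show ?thesis
  proof (rule Bochner_Integration.integrable_bound[OF _ meas])
    show "integrable P (\<lambda>y. 2 powr \<alpha> * (dist z x0 powr \<alpha> + dist x0 y powr \<alpha>))"
      using x0 by (intro integrable_mult_right integrable_add) auto
    show "AE y in P. norm (dist z y powr \<alpha>) \<le> norm (2 powr \<alpha> * (dist z x0 powr \<alpha> + dist x0 y powr \<alpha>))"
    proof (intro AE_I2)
      fix y
      have "dist z y powr \<alpha> \<le> (dist z x0 + dist x0 y) powr \<alpha>"
        using al by (intro powr_mono2) (auto intro: dist_triangle)
      also have "\<dots> \<le> 2 powr \<alpha> * (dist z x0 powr \<alpha> + dist x0 y powr \<alpha>)"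
        using al by (intro powr_tri) auto
      finally show "norm (dist z y powr \<alpha>) \<le> norm (2 powr \<alpha> * (dist z x0 powr \<alpha> + dist x0 y powr \<alpha>))"
        by simp
    qed
  qed
qed

theorem proposition4p2:
  fixes P :: "('a::polish_space) measure" and \<alpha> :: real and xs :: 'a
  assumes npc: "NPC TYPE('a)"
    and alpha: "1 \<le> \<alpha>" "\<alpha> \<le> 2"
    and prob: "prob_space P" and borel: "sets P = sets borel"
    and Pa: "P_alpha \<alpha> P"
    and min: "\<forall>z. F_alpha \<alpha> P xs \<le> F_alpha \<alpha> P z"
  shows "(\<forall>x. x \<noteq> xs \<longrightarrow> b_alpha \<alpha> P xs x > 0 \<longrightarrow>
            dist x xs powr \<alpha> \<le> (1 / b_alpha \<alpha> P xs x) *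
              (\<integral>y. dist x y powr \<alpha> - dist xs y powr \<alpha> \<partial>P))
       \<and> ((INF x\<in>UNIV - {xs}. b_alpha \<alpha> P xs x) > 0 \<longrightarrow>
           (\<forall>x. dist x xs powr \<alpha> \<le> (1 / (INF x\<in>UNIV - {xs}. b_alpha \<alpha> P xs x)) *
              (\<integral>y. dist x y powr \<alpha> - dist xs y powr \<alpha> \<partial>P)))"
proof -
  let ?F = "F_alpha \<alpha> P"
  have int: "\<And>z. integrable P (\<lambda>y. dist z y powr \<alpha>)"
    using integrable_dist_powr[OF prob borel Pa] alpha by simp
  have diff: "(\<integral>y. dist x y powr \<alpha> - dist xs y powr \<alpha> \<partial>P) = ?F x - ?F xs" for x
    unfolding F_alpha_def by (rule Bochner_Integration.integral_diff[OF int int])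
  have bval: "b_alpha \<alpha> P xs x = (?F x - ?F xs) / dist x xs powr \<alpha>" if xne: "x \<noteq> xs" for x
  proof -
    let ?\<gamma> = "geod_from xs x"
    let ?\<delta> = "dist x xs powr \<alpha>"
    have \<delta>: "?\<delta> > 0" using xne by simp
    let ?q = "\<lambda>t. (?F (?\<gamma> t) - (t powr (\<alpha>/2) + (1 - t) powr (\<alpha>/2)) * ?F xs) / (t powr (\<alpha>/2) * ?\<delta>)"
    have q1: "?q 1 = (?F x - ?F xs) / ?\<delta>"
      using geod_one[OF npc, of xs x] by simp
    have qle: "?q t \<le> (?F x - ?F xs) / ?\<delta>" if t: "t \<in> {0<..1}" for t
    proof -
      let ?c = "t powr (\<alpha>/2)" and ?e = "(1-t) powr (\<alpha>/2)"
      have c: "?c > 0" using t by simp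
      have pw: "dist (?\<gamma> t) y powr \<alpha> \<le> ?e * dist xs y powr \<alpha> + ?c * dist x y powr \<alpha>" for y
      proof -
        have C: "(dist y (?\<gamma> t))^2 \<le> (1-t)*(dist y xs)^2 + t*(dist y x)^2 - t*(1-t)*(dist xs x)^2"
          using geod_Cpt[OF npc, of t xs x] t unfolding Cpt_def by auto
        have "0 \<le> t*(1-t)*(dist xs x)^2" using t by simp
        hence "(dist y (?\<gamma> t))^2 \<le> (1-t)*(dist y xs)^2 + t*(dist y x)^2" using C by linarith
        hence "dist y (?\<gamma> t) powr \<alpha> \<le> ?e * dist y xs powr \<alpha> + ?c * dist y x powr \<alpha>"
          by (rule pointwise_bound[rotated 7]) (use t alpha in auto)
        thus ?thesis by (simp add: dist_commute)
      qed
      have "?F (?\<gamma> t) \<le> (\<integral>y. ?e * dist xs y powr \<alpha> + ?c * dist x y powr \<alpha> \<partial>P)"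
        unfolding F_alpha_def
      proof (rule integral_mono)
        show "integrable P (\<lambda>y. dist (?\<gamma> t) y powr \<alpha>)" by (rule int)
        show "integrable P (\<lambda>y. ?e * dist xs y powr \<alpha> + ?c * dist x y powr \<alpha>)"
          by (rule Bochner_Integration.integrable_add; rule integrable_mult_right; rule int)
        fix y show "dist (?\<gamma> t) y powr \<alpha> \<le> ?e * dist xs y powr \<alpha> + ?c * dist x y powr \<alpha>" by (rule pw)
      qed
      also have "\<dots> = ?e * ?F xs + ?c * ?F x"
        unfolding F_alpha_def using int by simp
      finally have Fb: "?F (?\<gamma> t) \<le> ?e * ?F xs + ?c * ?F x" .
      have "?q t \<le> (?c * (?F x - ?F xs)) / (?c * ?\<delta>)"
      proof (rule divide_right_mono)
        have "(?c + ?e) * ?F xs = ?c * ?F xs + ?e * ?F xs" by (rule distrib_right)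
        moreover have "?c * (?F x - ?F xs) = ?c * ?F x - ?c * ?F xs" by (rule right_diff_distrib)
        ultimately show "?F (?\<gamma> t) - (?c + ?e) * ?F xs \<le> ?c * (?F x - ?F xs)" using Fb by linarith
        show "0 \<le> ?c * ?\<delta>" using c \<delta> by simp
      qed
      also have "\<dots> = (?F x - ?F xs) / ?\<delta>" using c by simp
      finally show ?thesis .
    qed
    have "b_alpha \<alpha> P xs x = Sup (?q ` {0<..1})" unfolding b_alpha_def ..
    also have "\<dots> = (?F x - ?F xs) / ?\<delta>"
    proof (rule cSup_eq_maximum)
      have "?q 1 \<in> ?q ` {0<..1}" by (rule imageI) simp
      thus "(?F x - ?F xs) / ?\<delta> \<in> ?q ` {0<..1}" unfolding q1 .
      fix y assume "y \<in> ?q ` {0<..1}"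
      then obtain t where "t \<in> {0<..1}" "y = ?q t" by blast
      thus "y \<le> (?F x - ?F xs) / ?\<delta>" using qle by simp
    qed
    finally show ?thesis .
  qed
  have bnn: "b_alpha \<alpha> P xs x \<ge> 0" if "x \<noteq> xs" for x
    using bval[OF that] min by simp
  show ?thesis
  proof (intro conjI allI impI)
    fix x assume xne: "x \<noteq> xs" and bp: "b_alpha \<alpha> P xs x > 0"
    have \<delta>: "dist x xs powr \<alpha> > 0" using xne by simp
    have "?F x - ?F xs \<noteq> 0" using bp bval[OF xne] by auto
    thus "dist x xs powr \<alpha> \<le> (1 / b_alpha \<alpha> P xs x) * (\<integral>y. dist x y powr \<alpha> - dist xs y powr \<alpha> \<partial>P)"
      unfolding diff bval[OF xne] using \<delta> by simp
  next
    fix x assume Bp: "(INF x\<in>UNIV - {xs}. b_alpha \<alpha> P xs x) > 0"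
    let ?B = "(INF x\<in>UNIV - {xs}. b_alpha \<alpha> P xs x)"
    show "dist x xs powr \<alpha> \<le> (1 / ?B) * (\<integral>y. dist x y powr \<alpha> - dist xs y powr \<alpha> \<partial>P)"
    proof (cases "x = xs")
      case True thus ?thesis by simp
    next
      case xne: False
      have bdd: "bdd_below ((\<lambda>x. b_alpha \<alpha> P xs x) ` (UNIV - {xs}))"
        by (rule bdd_belowI[of _ 0]) (use bnn in auto)
      have Ble: "?B \<le> b_alpha \<alpha> P xs x" by (rule cINF_lower[OF bdd]) (use xne in simp)
      have \<delta>: "dist x xs powr \<alpha> > 0" using xne by simp
      have bpos: "b_alpha \<alpha> P xs x > 0" using Bp Ble by linarith
      have num: "?F x - ?F xs > 0" using bpos bval[OF xne] \<delta> by (simp add: zero_less_divide_iff) 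
      have e: "b_alpha \<alpha> P xs x * dist x xs powr \<alpha> = ?F x - ?F xs"
        using bval[OF xne] \<delta> by simp
      have "dist x xs powr \<alpha> = (?F x - ?F xs) / b_alpha \<alpha> P xs x"
        using e bpos by (simp add: eq_divide_eq mult.commute)
      also have "\<dots> \<le> (?F x - ?F xs) / ?B"
        by (rule divide_left_mono) (use Ble Bp num bpos in auto)
      finally show ?thesis unfolding diff by simp
    qed
  qed
qed

end
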